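(* Let $m\ge 1$ be an integer and $S>1$. For $j=1,\ldots,2m$ put $\theta_j=\pi(j-1/2)/m$, \[ z_j=\frac{S e^{i\theta_j}+S^{-1}e^{-i\theta_j}}{S+S^{-1}},\qquad w_j=\frac{1}{2m}\,\frac{S e^{i\theta_j}-S^{-1}e^{-i\theta_j}}{S+S^{-1}}, \] and define the rational function $r_m^{(T)}(z)=\sum_{j=1}^{2m}\frac{w_j}{z_j-z}$. Let \[ \alpha=\frac{S^{2m}+S^{-2m}}{S^{2m}-S^{-2m}},\qquad \beta=\frac{2}{S^{2m}-S^{-2m}}. \] Then \[ r_m^{(T)}(z)=\frac{1}{\alpha+\beta\,T_{2m}\!\left(\frac{S+S^{-1}}{2}z\right)}=\frac{1}{(\alpha-\beta)+2\beta\,T_m\!\left(\frac{S+S^{-1}}{2}z\right)^2}, \] where $T_j(z)=\cos(j\arccos z)$ is the Chebyshev polynomial of the first kind of degree $j$. Consequently $r_m^{(T)}$ is a rational function of exact type $(0,2m)$ (numerator degree $0$, denominator degree $2m$), and on the interval $[-2/(S+S^{-1}),\,2/(S+S^{-1})]$ it equioscillates $2m+1$ times, alternating between the values $(\alpha+\beta)^{-1}$ and $(\alpha-\beta)^{-1}$.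
   Context: The function $r_m^{(T)}$ arises as the trapezoid-rule approximation, with $2m$ equispaced nodes in $\theta\in[0,2\pi)$, of the contour integral $\frac{1}{2\pi i}\int_{\Gamma_S}\frac{d\gamma}{\gamma-z}$ over the ellipse $\Gamma_S=\{\gamma(\theta)=\frac{Se^{i\theta}+S^{-1}e^{-i\theta}}{S+S^{-1}}:\theta\in[0,2\pi)\}$. A rational function is of type $(\mu,\nu)$ if it is a quotient of a polynomial of degree at most $\mu$ by a polynomial of degree at most $\nu$. *)

theory Defs
  imports "HOL-Analysis.Analysis" "HOL-Computational_Algebra.Polynomial"
begin

definition thetaT :: "nat \<Rightarrow> nat \<Rightarrow> real" where
  "thetaT m j = pi * (real j - 1/2) / real m"

definition zT :: "real \<Rightarrow> nat \<Rightarrow> nat \<Rightarrow> complex" where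
  "zT S m j = (of_real S * exp (\<i> * of_real (thetaT m j)) + of_real (1/S) * exp (- \<i> * of_real (thetaT m j)))
              / of_real (S + 1/S)"

definition wT :: "real \<Rightarrow> nat \<Rightarrow> nat \<Rightarrow> complex" where
  "wT S m j = (1 / of_nat (2*m)) *
     ((of_real S * exp (\<i> * of_real (thetaT m j)) - of_real (1/S) * exp (- \<i> * of_real (thetaT m j)))
      / of_real (S + 1/S))"

definition rT :: "real \<Rightarrow> nat \<Rightarrow> complex \<Rightarrow> complex" where
  "rT S m z = (\<Sum>j=1..2*m. wT S m j / (zT S m j - z))"

definition alphaT :: "real \<Rightarrow> nat \<Rightarrow> real" where
  "alphaT S m = (S ^ (2*m) + (1/S) ^ (2*m)) / (S ^ (2*m) - (1/S) ^ (2*m))"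

definition betaT :: "real \<Rightarrow> nat \<Rightarrow> real" where
  "betaT S m = 2 / (S ^ (2*m) - (1/S) ^ (2*m))"

definition chebT :: "nat \<Rightarrow> complex \<Rightarrow> complex" where
  "chebT j z = cos (of_nat j * Arccos z)"

end

theory Submission
  imports Defs
begin

fun cheb :: "nat \<Rightarrow> complex poly" where
  "cheb 0 = 1"
| "cheb (Suc 0) = [:0, 1:]"
| "cheb (Suc (Suc n)) = smult 2 (pCons 0 (cheb (Suc n))) - cheb n"

lemma cheb_poly:
  assumes "\<zeta> \<noteq> 0"
  shows "poly (cheb n) ((\<zeta> + 1/\<zeta>)/2) = (\<zeta>^n + (1/\<zeta>)^n)/2"
proof (induction n rule: cheb.induct)
  case (3 n)
  define w where "w = (\<zeta> + 1/\<zeta>)/2"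
  define y where "y = 1/\<zeta>"
  have zy: "\<zeta> * y = 1" using assms by (simp add: y_def)
  have "poly (cheb (Suc (Suc n))) w = 2 * w * poly (cheb (Suc n)) w - poly (cheb n) w"
    by simp
  also have "\<dots> = (\<zeta> + y) * ((\<zeta>^Suc n + y^Suc n)/2) - (\<zeta>^n + y^n)/2"
  proof -
    have h1: "poly (cheb (Suc n)) w = (\<zeta>^Suc n + y^Suc n)/2"
      unfolding w_def y_def by (rule 3(1))
    have h0: "poly (cheb n) w = (\<zeta>^n + y^n)/2"
      unfolding w_def y_def by (rule 3(2))
    show ?thesis unfolding h1 h0 by (simp add: w_def y_def)
  qed
  also have "\<dots> = (\<zeta>^Suc (Suc n) + y^Suc (Suc n))/2 + ((\<zeta>*y) * \<zeta>^n + (\<zeta>*y)*y^n)/2 - (\<zeta>^n + y^n)/2"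
    by (simp add: field_simps power_Suc)
  also have "\<dots> = (\<zeta>^Suc (Suc n) + y^Suc (Suc n))/2" using zy by simp
  finally show ?case by (simp add: w_def y_def)
qed (use assms in \<open>auto simp: field_simps\<close>)

lemma cheb_degree: "degree (cheb n) = n"
proof (induction n rule: cheb.induct)
  case (3 n)
  have ne: "cheb (Suc n) \<noteq> 0" using 3(1) by (metis Zero_not_Suc degree_0)
  have d1: "degree (smult (2::complex) (pCons 0 (cheb (Suc n)))) = Suc (Suc n)"
    using ne 3(1) by simp
  have "degree (smult (2::complex) (pCons 0 (cheb (Suc n))) + - cheb n) = Suc (Suc n)"
    by (subst degree_add_eq_left) (use d1 3(2) in auto)
  then show ?case by simp
qed auto

lemma chebT_eq: "chebT n w = poly (cheb n) w"
proof -
  define A where "A = Arccos w"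
  define \<zeta> where "\<zeta> = exp (\<i> * A)"
  have z0: "\<zeta> \<noteq> 0" by (simp add: \<zeta>_def)
  have inv: "exp (-(\<i> * A)) = 1/\<zeta>" by (simp add: \<zeta>_def exp_minus field_simps)
  have w: "w = (\<zeta> + 1/\<zeta>)/2"
    using cos_exp_eq[of A] inv by (simp add: A_def \<zeta>_def)
  have "chebT n w = (exp (\<i> * (of_nat n * A)) + exp (-(\<i> * (of_nat n * A))))/2"
    unfolding chebT_def A_def by (rule cos_exp_eq)
  also have "exp (\<i> * (of_nat n * A)) = \<zeta>^n"
    by (simp add: \<zeta>_def exp_of_nat_mult[symmetric] mult.commute mult.left_commute)
  also have "exp (-(\<i> * (of_nat n * A))) = (1/\<zeta>)^n"
    by (simp add: inv[symmetric] exp_of_nat_mult[symmetric] mult.commute mult.left_commute)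
  also have "(\<zeta>^n + (1/\<zeta>)^n)/2 = poly (cheb n) w"
    by (subst w) (rule cheb_poly[OF z0, symmetric])
  finally show ?thesis .
qed

definition omg :: "int \<Rightarrow> nat \<Rightarrow> nat \<Rightarrow> complex" where
  "omg s m j = exp (\<i> * complex_of_real (of_int s * thetaT m j))"

lemma expi_pow: "exp (\<i> * complex_of_real t) ^ n = exp (\<i> * complex_of_real (real n * t))"
  by (simp add: exp_of_nat_mult[symmetric] mult_ac)

lemma expi_int_pi: "exp (\<i> * complex_of_real (pi * of_int k)) = (if even k then 1 else -1)"
  by (subst cis_conv_exp[symmetric]) (simp add: complex_eq_iff)

lemma omg_pow:
  assumes "m \<ge> 1" "s \<in> {-1, 1}" "j \<ge> 1"
  shows "omg s m j ^ (2*m) = -1"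
proof -
  have "real (2*m) * (of_int s * thetaT m j) = pi * of_int (s * (2 * int j - 1))"
    using assms(1) by (simp add: thetaT_def field_simps)
  moreover have "odd (s * (2 * int j - 1))" using assms(2) by auto
  ultimately show ?thesis
    unfolding omg_def expi_pow by (simp only: expi_int_pi) simp
qed

lemma omg_sum:
  assumes "m \<ge> 1" "s \<in> {-1, 1}" "0 < k" "k < 2*m"
  shows "(\<Sum>j=1..2*m. omg s m j ^ k) = 0"
proof -
  define b where "b = exp (\<i> * complex_of_real (- of_int s * real k * pi / (2 * m)))"
  define q where "q = exp (\<i> * complex_of_real (of_int s * real k * pi / m))"
  have eq: "omg s m j ^ k = b * q ^ j" for j
  proof -
    have "real k * (of_int s * thetaT m j) = - of_int s * real k * pi / (2 * m) + real j * (of_int s * real k * pi / m)"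
      using assms(1) by (simp add: thetaT_def field_simps)
    then show ?thesis
      unfolding omg_def expi_pow b_def q_def
      by (simp only: of_real_add distrib_left exp_add)
  qed
  have q2m: "q ^ (2*m) = 1"
  proof -
    have "real (2*m) * (of_int s * real k * pi / m) = pi * of_int (2 * (s * int k))"
      using assms(1) by (simp add: field_simps)
    then show ?thesis unfolding q_def expi_pow by (simp only: expi_int_pi) simp
  qed
  have q1: "q \<noteq> 1"
  proof
    assume "q = 1"
    then obtain n :: int where n: "of_int s * real k * pi / m = of_int (2 * n) * pi"
      unfolding q_def exp_eq_1 by auto
    then have "of_int s * real k = of_int (2 * n) * real m"
      using assms(1) by (simp add: field_simps)
    then have "s * int k = 2 * n * int m" by (metis of_int_eq_iff of_int_mult of_int_of_nat_eq)
    then have "\<bar>s * int k\<bar> = \<bar>2 * n * int m\<bar>" by simp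
    then have kk: "int k = 2 * \<bar>n\<bar> * int m" using assms(2) by (auto simp: abs_mult)
    show False
    proof (cases "n = 0")
      case True then show False using kk assms(3) by simp
    next
      case False
      then have "1 \<le> \<bar>n\<bar>" by simp
      then have "2 * 1 * int m \<le> 2 * \<bar>n\<bar> * int m" by (intro mult_right_mono) auto
      moreover have "int k < 2 * int m" using assms(4) by linarith
      ultimately show False using kk by linarith
    qed
  qed
  have "(\<Sum>j=1..2*m. omg s m j ^ k) = b * (\<Sum>j=1..2*m. q ^ j)"
    by (simp add: eq sum_distrib_left)
  also have "(\<Sum>j=1..2*m. q ^ j) = 0"
    using q1 q2m assms(1) by (simp add: sum_gp power_Suc)
  finally show ?thesis by simp
qed

lemma root_sum:
  assumes m: "m \<ge> 1" and s: "s \<in> {-1, 1}" and nz: "\<forall>j\<in>{1..2*m}. x * omg s m j \<noteq> 1"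
  shows "(1 + x^(2*m)) * (\<Sum>j=1..2*m. 1/(1 - x * omg s m j)) = of_nat (2*m)"
proof -
  have trm: "(1 + x^(2*m)) * (1/(1 - x * omg s m j)) = (\<Sum>k<2*m. x^k * omg s m j ^ k)"
    if j: "j \<in> {1..2*m}" for j
  proof -
    have ne: "x * omg s m j \<noteq> 1" using nz j by auto
    have pw: "(x * omg s m j) ^ (2*m) = - (x ^ (2*m))"
      using omg_pow[OF m s, of j] j by (simp add: power_mult_distrib)
    have "(\<Sum>k<2*m. x^k * omg s m j ^ k) = (\<Sum>k<2*m. (x * omg s m j) ^ k)"
      by (simp add: power_mult_distrib)
    also have "\<dots> = (1 - (x * omg s m j) ^ (2*m)) / (1 - x * omg s m j)"
      using ne by (simp add: sum_gp_strict)
    finally show ?thesis using pw by simp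
  qed
  have "(1 + x^(2*m)) * (\<Sum>j=1..2*m. 1/(1 - x * omg s m j))
      = (\<Sum>j=1..2*m. \<Sum>k<2*m. x^k * omg s m j ^ k)"
    unfolding sum_distrib_left by (rule sum.cong[OF refl], rule trm)
  also have "\<dots> = (\<Sum>k<2*m. x^k * (\<Sum>j=1..2*m. omg s m j ^ k))"
    by (subst sum.swap) (simp add: sum_distrib_left)
  also have "\<dots> = (\<Sum>k<2*m. (if k = 0 then of_nat (2*m) else 0))"
  proof (rule sum.cong)
    fix k assume "k \<in> {..<2*m}"
    then show "x^k * (\<Sum>j=1..2*m. omg s m j ^ k) = (if k = 0 then of_nat (2*m) else 0)"
      using omg_sum[OF m s, of k] by auto
  qed simp
  also have "\<dots> = of_nat (2*m)" using m by simp
  finally show ?thesis .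
qed

lemma alg1:
  fixes a \<zeta> K N :: complex
  assumes "a \<noteq> 0" "\<zeta> \<noteq> 0" "a \<noteq> \<zeta>" "a * \<zeta> \<noteq> 1" "K \<noteq> 0" "N \<noteq> 0"
  shows "((1/N) * ((a - 1/a)/K)) / ((a + 1/a)/K - (\<zeta> + 1/\<zeta>)/K)
       = (1/N) * (1/(1 - \<zeta>/a) - 1/(1 - a*\<zeta>))"
proof -
  have f: "(a + 1/a)/K - (\<zeta> + 1/\<zeta>)/K = (a - \<zeta>) * (a*\<zeta> - 1) / (a*\<zeta>*K)"
    using assms by (simp add: field_simps)
  have n1: "a - \<zeta> \<noteq> 0" "a*\<zeta> - 1 \<noteq> 0" using assms by auto
  have g1: "1/(1 - \<zeta>/a) = a/(a - \<zeta>)" using assms n1 by (simp add: field_simps)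
  have g2: "1/(1 - a*\<zeta>) = -1/(a*\<zeta> - 1)" using assms n1 by (simp add: field_simps)
  have "((1/N) * ((a - 1/a)/K)) / ((a - \<zeta>) * (a*\<zeta> - 1) / (a*\<zeta>*K))
      = (1/N) * (\<zeta> * (a*a - 1) / ((a - \<zeta>) * (a*\<zeta> - 1)))"
  proof -
    define P where "P = (a - \<zeta>) * (a*\<zeta> - 1)"
    have "P \<noteq> 0" unfolding P_def using n1 by (metis mult_eq_0_iff)
    then show ?thesis unfolding P_def[symmetric] using assms by (simp add: field_simps)
  qed
  also have "\<zeta> * (a*a - 1) / ((a - \<zeta>) * (a*\<zeta> - 1)) = a/(a - \<zeta>) - -1/(a*\<zeta> - 1)"
  proof -
    define u1 where "u1 = a - \<zeta>"
    define v1 where "v1 = a*\<zeta> - 1"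
    have uv: "u1 \<noteq> 0" "v1 \<noteq> 0" using n1 by (auto simp: u1_def v1_def)
    have "a/u1 - -1/v1 = (a * v1 + u1)/(u1 * v1)" using uv by (simp add: field_simps)
    moreover have "a * v1 + u1 = \<zeta> * (a*a - 1)" by (simp add: u1_def v1_def algebra_simps)
    ultimately show ?thesis by (simp add: u1_def v1_def)
  qed
  finally show ?thesis unfolding f g1 g2 by simp
qed
lemma AA: "(A::real) > 1 \<Longrightarrow> complex_of_real A * complex_of_real A \<noteq> 1"
proof
  assume "A > 1" "complex_of_real A * complex_of_real A = 1"
  then have "A * A = 1" by (metis of_real_mult of_real_eq_1_iff)
  moreover have "1 < A * A" using less_1_mult[OF \<open>A > 1\<close> \<open>A > 1\<close>] .
  ultimately show False by simp
qed

lemma alg2: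
  fixes Z :: complex and A :: real
  assumes A: "A > 1" and Z: "Z \<noteq> 0" and n1: "1 + Z / of_real A \<noteq> 0" and n2: "1 + of_real A * Z \<noteq> 0"
  shows "1/(1 + Z / of_real A) - 1/(1 + of_real A * Z)
       = 1/(of_real ((A + 1/A)/(A - 1/A)) + of_real (2/(A - 1/A)) * ((Z + 1/Z)/2))"
    and "of_real ((A + 1/A)/(A - 1/A)) + of_real (2/(A - 1/A)) * ((Z + 1/Z)/2) \<noteq> 0"
proof -
  define c where "c = complex_of_real A"
  have c0: "c \<noteq> 0" using A by (simp add: c_def)
  have cc: "c * c \<noteq> 1" using AA[OF A] by (simp add: c_def)
  define D where "D = c - 1/c"
  have D0: "D \<noteq> 0" using c0 cc by (simp add: D_def field_simps)
  define P1 where "P1 = 1 + Z / c"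
  define P2 where "P2 = 1 + c * Z"
  have P10: "P1 \<noteq> 0" using n1 by (simp add: P1_def c_def)
  have P20: "P2 \<noteq> 0" using n2 by (simp add: P2_def c_def)
  have E0: "of_real ((A + 1/A)/(A - 1/A)) + of_real (2/(A - 1/A)) * ((Z + 1/Z)/2)
      = (c + 1/c)/D + 2/D * ((Z + 1/Z)/2)" by (simp add: c_def D_def)
  also have "\<dots> = (c + 1/c + Z + 1/Z)/D" using D0 by (simp add: field_simps)
  also have "c + 1/c + Z + 1/Z = P1 * P2 / Z" using c0 Z by (simp add: P1_def P2_def field_simps)
  finally have E: "of_real ((A + 1/A)/(A - 1/A)) + of_real (2/(A - 1/A)) * ((Z + 1/Z)/2) = P1 * P2 / (Z * D)"
    by simp
  have PP: "P2 - P1 = Z * D" using c0 by (simp add: P1_def P2_def D_def field_simps)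
  show "of_real ((A + 1/A)/(A - 1/A)) + of_real (2/(A - 1/A)) * ((Z + 1/Z)/2) \<noteq> 0"
    unfolding E using P10 P20 Z D0 by simp
  have "1/P1 - 1/P2 = (P2 - P1)/(P1*P2)" using P10 P20 by (simp add: field_simps)
  also have "\<dots> = 1/(P1 * P2 / (Z * D))" unfolding PP using Z D0 by simp
  finally show "1/(1 + Z / of_real A) - 1/(1 + of_real A * Z)
       = 1/(of_real ((A + 1/A)/(A - 1/A)) + of_real (2/(A - 1/A)) * ((Z + 1/Z)/2))"
    unfolding E by (simp add: P1_def P2_def c_def)
qed

lemma joukowski: "\<exists>\<zeta>::complex. \<zeta> \<noteq> 0 \<and> w = (\<zeta> + 1/\<zeta>)/2"
proof -
  define A where "A = Arccos w"
  define \<zeta> where "\<zeta> = exp (\<i> * A)"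
  have z0: "\<zeta> \<noteq> 0" by (simp add: \<zeta>_def)
  have inv: "exp (-(\<i> * A)) = 1/\<zeta>" by (simp add: \<zeta>_def exp_minus field_simps)
  have w: "w = (\<zeta> + 1/\<zeta>)/2"
    using cos_exp_eq[of A] inv by (simp add: A_def \<zeta>_def)
  show ?thesis using z0 w by blast
qed

lemma cheb_jouk: "\<zeta> \<noteq> 0 \<Longrightarrow> chebT n ((\<zeta> + 1/\<zeta>)/2) = (\<zeta>^n + (1/\<zeta>)^n)/2"
  by (simp add: chebT_eq cheb_poly)

lemma omg_neg: "omg (-1) m j = 1 / omg 1 m j"
  by (simp add: omg_def exp_minus divide_inverse)

lemma omg1: "omg 1 m j = exp (\<i> * complex_of_real (thetaT m j))" by (simp add: omg_def)

lemma inv_term: "complex_of_real (1/S) * exp (- \<i> * complex_of_real t) = 1/(complex_of_real S * exp (\<i> * complex_of_real t))"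
proof -
  have "exp (- \<i> * complex_of_real t) = inverse (exp (\<i> * complex_of_real t))"
    by (simp add: exp_minus[symmetric])
  then show ?thesis by (simp add: divide_inverse inverse_mult_distrib)
qed

lemma zT_eq: "zT S m j = (of_real S * omg 1 m j + 1/(of_real S * omg 1 m j)) / of_real (S + 1/S)"
  unfolding zT_def inv_term omg1 by (rule refl)

lemma wT_eq: "wT S m j = (1 / of_nat (2*m)) * ((of_real S * omg 1 m j - 1/(of_real S * omg 1 m j)) / of_real (S + 1/S))"
  unfolding wT_def inv_term omg1 by (rule refl)

lemma aux_div: "(n::complex) \<noteq> 0 \<Longrightarrow> (1/n) * (n/p - n/q) = 1/p - 1/q"
  unfolding divide_inverse
  by (simp add: right_diff_distrib mult.assoc[symmetric])

lemma omg_nz: "omg s m j \<noteq> 0" by (simp add: omg_def)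

lemma master_nonnode:
  assumes m: "m \<ge> 1" and S: "S > 1" and nn: "\<forall>j\<in>{1..2*m}. z \<noteq> zT S m j"
  shows "rT S m z = 1 / (of_real (alphaT S m) + of_real (betaT S m) * chebT (2*m) (of_real ((S + 1/S)/2) * z))
       \<and> of_real (alphaT S m) + of_real (betaT S m) * chebT (2*m) (of_real ((S + 1/S)/2) * z) \<noteq> 0"
proof -
  define N where "N = 2*m"
  define K where "K = complex_of_real (S + 1/S)"
  have S0: "S \<noteq> 0" using S by simp
  have Kpos: "S + 1/S > 0" using S by (simp add: add_pos_pos)
  have K0: "K \<noteq> 0" using Kpos unfolding K_def by (metis of_real_eq_0_iff order_less_irrefl)
  have N0: "(of_nat N :: complex) \<noteq> 0" using m by (simp add: N_def)
  obtain \<zeta> where z0: "\<zeta> \<noteq> 0" and zc: "of_real ((S + 1/S)/2) * z = (\<zeta> + 1/\<zeta>)/2"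
    using joukowski by blast
  have zz: "z = (\<zeta> + 1/\<zeta>)/K"
  proof -
    have "K * z = 2 * (complex_of_real ((S + 1/S)/2) * z)" unfolding K_def by simp
    also have "\<dots> = \<zeta> + 1/\<zeta>" unfolding zc by simp
    finally have "K * z = \<zeta> + 1/\<zeta>" .
    then show ?thesis using K0 by (simp add: field_simps)
  qed
  define a where "a j = complex_of_real S * omg 1 m j" for j
  have a0: "a j \<noteq> 0" for j using S0 omg_nz by (simp add: a_def)
  have zTa: "zT S m j = (a j + 1/a j)/K" for j by (simp add: zT_eq a_def K_def)
  have wTa: "wT S m j = (1 / of_nat N) * ((a j - 1/a j)/K)" for j by (simp add: wT_eq a_def K_def N_def)
  have ne1: "a j \<noteq> \<zeta>" and ne2: "a j * \<zeta> \<noteq> 1" if j: "j \<in> {1..2*m}" for j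
  proof -
    show "a j \<noteq> \<zeta>" using nn j zz zTa by metis
    show "a j * \<zeta> \<noteq> 1"
    proof
      assume h: "a j * \<zeta> = 1"
      then have "\<zeta> = 1 / a j" "1/\<zeta> = a j" using a0[of j] z0 by (auto simp: field_simps)
      then have "z = zT S m j" unfolding zz zTa by (simp add: add.commute)
      then show False using nn j by blast
    qed
  qed
  define X where "X = \<zeta> / complex_of_real S"
  define Y where "Y = complex_of_real S * \<zeta>"
  have Xa: "X * omg (-1) m j = \<zeta> / a j" for j by (simp add: X_def a_def omg_neg)
  have Ya: "Y * omg 1 m j = a j * \<zeta>" for j by (simp add: Y_def a_def)
  have trm: "wT S m j / (zT S m j - z) = (1 / of_nat N) * (1/(1 - X * omg (-1) m j) - 1/(1 - Y * omg 1 m j))"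
    if j: "j \<in> {1..2*m}" for j
    unfolding wTa zTa zz Xa Ya
    by (rule alg1[OF a0 z0 ne1[OF j] ne2[OF j] K0 N0])
  have "rT S m z = (\<Sum>j=1..2*m. (1 / of_nat N) * (1/(1 - X * omg (-1) m j) - 1/(1 - Y * omg 1 m j)))"
    unfolding rT_def by (rule sum.cong[OF refl], rule trm)
  also have "\<dots> = (1 / of_nat N) * ((\<Sum>j=1..2*m. 1/(1 - X * omg (-1) m j)) - (\<Sum>j=1..2*m. 1/(1 - Y * omg 1 m j)))"
    by (simp add: sum_distrib_left sum_subtractf right_diff_distrib)
  finally have r1: "rT S m z = (1 / of_nat N) * ((\<Sum>j=1..2*m. 1/(1 - X * omg (-1) m j)) - (\<Sum>j=1..2*m. 1/(1 - Y * omg 1 m j)))" .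
  have hX: "(1 + X^(2*m)) * (\<Sum>j=1..2*m. 1/(1 - X * omg (-1) m j)) = of_nat N"
    unfolding N_def
  proof (rule root_sum[OF m], simp, intro ballI)
    fix j assume j: "j \<in> {1..2*m}"
    show "X * omg (-1) m j \<noteq> 1" unfolding Xa
    proof
      assume "\<zeta> / a j = 1"
      then have "\<zeta> = a j" using a0[of j] by (simp add: field_simps)
      with ne1[OF j] show False by simp
    qed
  qed
  have hY: "(1 + Y^(2*m)) * (\<Sum>j=1..2*m. 1/(1 - Y * omg 1 m j)) = of_nat N"
    unfolding N_def
  proof (rule root_sum[OF m], simp, intro ballI)
    fix j assume j: "j \<in> {1..2*m}"
    show "Y * omg 1 m j \<noteq> 1" unfolding Ya using ne2[OF j] .
  qed
  have X0: "1 + X^(2*m) \<noteq> 0" using hX N0 by auto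
  have Y0: "1 + Y^(2*m) \<noteq> 0" using hY N0 by auto
  have sX: "(\<Sum>j=1..2*m. 1/(1 - X * omg (-1) m j)) = of_nat N / (1 + X^(2*m))"
    using hX X0 by (simp add: field_simps)
  have sY: "(\<Sum>j=1..2*m. 1/(1 - Y * omg 1 m j)) = of_nat N / (1 + Y^(2*m))"
    using hY Y0 by (simp add: field_simps)
  have r2: "rT S m z = 1/(1 + X^(2*m)) - 1/(1 + Y^(2*m))"
    unfolding r1 sX sY using N0 by (rule aux_div)
  define A where "A = S^(2*m)"
  define Z where "Z = \<zeta>^(2*m)"
  have A1: "A > 1" unfolding A_def using S m by (simp add: one_less_power)
  have Z0: "Z \<noteq> 0" using z0 by (simp add: Z_def)
  have XZ: "X^(2*m) = Z / of_real A" by (simp add: X_def Z_def A_def power_divide)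
  have YZ: "Y^(2*m) = of_real A * Z" by (simp add: Y_def Z_def A_def power_mult_distrib)
  have al: "alphaT S m = (A + 1/A)/(A - 1/A)" by (simp add: alphaT_def A_def power_one_over)
  have be: "betaT S m = 2/(A - 1/A)" by (simp add: betaT_def A_def power_one_over)
  have ch: "chebT (2*m) (of_real ((S + 1/S)/2) * z) = (Z + 1/Z)/2"
    unfolding zc cheb_jouk[OF z0] by (simp add: Z_def power_one_over)
  show ?thesis
    unfolding r2 al be ch XZ YZ
    using alg2[OF A1 Z0] X0 Y0 unfolding XZ YZ by blast
qed

lemma master_node:
  assumes m: "m \<ge> 1" and S: "S > 1" and j: "j \<in> {1..2*m}"
  shows "of_real (alphaT S m) + of_real (betaT S m) * chebT (2*m) (of_real ((S + 1/S)/2) * zT S m j) = 0"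
proof -
  define K where "K = complex_of_real (S + 1/S)"
  have S0: "S \<noteq> 0" using S by simp
  have Kpos: "S + 1/S > 0" using S by (simp add: add_pos_pos)
  have K0: "K \<noteq> 0" using Kpos unfolding K_def by (metis of_real_eq_0_iff order_less_irrefl)
  define a where "a = complex_of_real S * omg 1 m j"
  have a0: "a \<noteq> 0" using S0 omg_nz by (simp add: a_def)
  have cz: "of_real ((S + 1/S)/2) * zT S m j = (a + 1/a)/2"
  proof -
    have "of_real ((S + 1/S)/2) * zT S m j = (K/2) * ((a + 1/a)/K)"
      by (simp add: zT_eq a_def K_def)
    also have "\<dots> = (a + 1/a)/2" using K0 by simp
    finally show ?thesis .
  qed
  obtain \<zeta> where z0: "\<zeta> \<noteq> 0" and zc: "(a + 1/a)/2 = (\<zeta> + 1/\<zeta>)/2"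
    using joukowski by blast
  have "(\<zeta> - a) * (\<zeta> - 1/a) = \<zeta> * ((\<zeta> + 1/\<zeta>) - (a + 1/a))"
    using a0 z0 by (simp add: field_simps)
  also have "\<dots> = 0"
  proof -
    have "a + 1/a = 2 * ((a + 1/a)/2)" by simp
    also have "\<dots> = 2 * ((\<zeta> + 1/\<zeta>)/2)" by (simp only: zc)
    also have "\<dots> = \<zeta> + 1/\<zeta>" by simp
    finally show ?thesis by simp
  qed
  finally have "\<zeta> = a \<or> \<zeta> = 1/a" by simp
  define A where "A = S^(2*m)"
  have A1: "A > 1" unfolding A_def using S m by (simp add: one_less_power)
  have aN: "a^(2*m) = - of_real A"
    using omg_pow[OF m, of 1 j] j by (simp add: a_def A_def power_mult_distrib)
  define Z where "Z = \<zeta>^(2*m)"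
  have ZZ: "Z + 1/Z = - of_real (A + 1/A)"
  proof (cases "\<zeta> = a")
    case True then show ?thesis by (simp add: Z_def aN)
  next
    case False
    then have "\<zeta> = 1/a" using \<open>\<zeta> = a \<or> \<zeta> = 1/a\<close> by simp
    then have "Z = - 1 / of_real A" by (simp add: Z_def power_one_over aN)
    then show ?thesis by simp
  qed
  have ch: "chebT (2*m) (of_real ((S + 1/S)/2) * zT S m j) = - of_real (A + 1/A) / 2"
    unfolding cz zc cheb_jouk[OF z0] using ZZ by (simp add: Z_def power_one_over)
  have al: "alphaT S m = (A + 1/A)/(A - 1/A)" by (simp add: alphaT_def A_def power_one_over)
  have be: "betaT S m = 2/(A - 1/A)" by (simp add: betaT_def A_def power_one_over)
  have "(A + 1/A)/(A - 1/A) + 2/(A - 1/A) * (- (A + 1/A) / 2) = 0"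
  proof -
    define D where "D = A - 1/A"
    define E where "E = A + 1/A"
    have "D \<noteq> 0" using A1 less_1_mult[OF A1 A1] by (simp add: D_def field_simps)
    then have "E/D + 2/D * (- E / 2) = 0" by (simp add: field_simps)
    then show ?thesis by (simp add: D_def E_def)
  qed
  then have "complex_of_real ((A + 1/A)/(A - 1/A) + 2/(A - 1/A) * (- (A + 1/A) / 2)) = 0" by simp
  then show ?thesis unfolding ch al be by simp
qed

lemma cheb_double: "chebT (2*m) w = 2 * (chebT m w)^2 - 1"
proof -
  obtain \<zeta> :: complex where z0: "\<zeta> \<noteq> 0" and w: "w = (\<zeta> + 1/\<zeta>)/2" using joukowski by blast
  define p where "p = \<zeta>^m"
  define q where "q = (1/\<zeta>)^m"
  have e: "p * q = 1" using z0 by (simp add: p_def q_def power_one_over)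
  have "chebT (2*m) w = (\<zeta>^(2*m) + (1/\<zeta>)^(2*m))/2" unfolding w by (rule cheb_jouk[OF z0])
  also have "\<dots> = (p^2 + q^2)/2" by (simp add: p_def q_def power_mult mult.commute)
  also have "\<dots> = 2 * ((p + q)/2)^2 - 1"
    using e by (simp add: power2_eq_square field_simps)
  also have "\<dots> = 2 * ((\<zeta>^m + (1/\<zeta>)^m)/2)^2 - 1" by (simp add: p_def q_def)
  also have "\<dots> = 2 * (chebT m w)^2 - 1" unfolding w cheb_jouk[OF z0] ..
  finally show ?thesis .
qed

lemma ab_pos:
  assumes m: "m \<ge> 1" and S: "S > 1"
  shows "betaT S m > 0" "alphaT S m - betaT S m > 0"
proof -
  define A where "A = S^(2*m)"
  have A1: "A > 1" unfolding A_def using S m by (simp add: one_less_power)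
  have al: "alphaT S m = (A + 1/A)/(A - 1/A)" by (simp add: alphaT_def A_def power_one_over)
  have be: "betaT S m = 2/(A - 1/A)" by (simp add: betaT_def A_def power_one_over)
  have D: "A - 1/A > 0" using A1 less_1_mult[OF A1 A1] by (simp add: field_simps)
  show "betaT S m > 0" unfolding be using D by simp
  have "(A + 1/A)/(A - 1/A) - 2/(A - 1/A) = (A + 1/A - 2)/(A - 1/A)" by (simp add: diff_divide_distrib)
  moreover have "A + 1/A - 2 = (A - 1)^2 / A" using A1 by (simp add: field_simps power2_eq_square)
  moreover have "(A - 1)^2 / A > 0" using A1 by simp
  ultimately show "alphaT S m - betaT S m > 0" unfolding al be using D by simp
qed

lemma real_val:
  assumes m: "m \<ge> 1" and S: "S > 1" and x: "\<bar>(S + 1/S)/2 * x\<bar> \<le> 1"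
  shows "rT S m (of_real x) = of_real (1 / (alphaT S m + betaT S m * cos (real (2*m) * arccos ((S + 1/S)/2 * x))))"
    and "alphaT S m - betaT S m \<le> alphaT S m + betaT S m * cos (real (2*m) * arccos ((S + 1/S)/2 * x))"
    and "alphaT S m + betaT S m * cos (real (2*m) * arccos ((S + 1/S)/2 * x)) \<le> alphaT S m + betaT S m"
proof -
  define y where "y = (S + 1/S)/2 * x"
  define t where "t = cos (real (2*m) * arccos y)"
  have ch: "chebT (2*m) (of_real ((S + 1/S)/2) * of_real x) = of_real t"
  proof -
    have "chebT (2*m) (of_real ((S + 1/S)/2) * of_real x) = cos (of_nat (2*m) * Arccos (of_real y))"
      by (simp add: chebT_def y_def)
    also have "Arccos (of_real y) = of_real (arccos y)" using x by (simp add: y_def of_real_arccos)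
    also have "cos (of_nat (2*m) * complex_of_real (arccos y)) = of_real t"
      unfolding t_def by (simp add: cos_of_real[symmetric])
    finally show ?thesis .
  qed
  have t1: "-1 \<le> t" "t \<le> 1" unfolding t_def by auto
  have bp: "betaT S m > 0" and abp: "alphaT S m - betaT S m > 0" using ab_pos[OF m S] by auto
  have lo: "alphaT S m - betaT S m \<le> alphaT S m + betaT S m * t"
    using mult_left_mono[OF t1(1), of "betaT S m"] bp by simp
  have hi: "alphaT S m + betaT S m * t \<le> alphaT S m + betaT S m"
    using mult_left_mono[OF t1(2), of "betaT S m"] bp by simp
  have Dr: "of_real (alphaT S m) + of_real (betaT S m) * chebT (2*m) (of_real ((S + 1/S)/2) * of_real x)
          = complex_of_real (alphaT S m + betaT S m * t)" unfolding ch by simp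
  have pos: "alphaT S m + betaT S m * t > 0" using lo abp by linarith
  have nn: "\<forall>j\<in>{1..2*m}. complex_of_real x \<noteq> zT S m j"
  proof
    fix j assume j: "j \<in> {1..2*m}"
    show "complex_of_real x \<noteq> zT S m j"
    proof
      assume "complex_of_real x = zT S m j"
      then have "complex_of_real (alphaT S m + betaT S m * t) = 0"
        using master_node[OF m S j] Dr by metis
      then have "alphaT S m + betaT S m * t = 0" by (simp only: of_real_eq_0_iff)
      with pos show False by linarith
    qed
  qed
  show "rT S m (of_real x) = of_real (1 / (alphaT S m + betaT S m * cos (real (2*m) * arccos ((S + 1/S)/2 * x))))"
    using master_nonnode[OF m S nn] Dr by (simp add: t_def y_def)
  show "alphaT S m - betaT S m \<le> alphaT S m + betaT S m * cos (real (2*m) * arccos ((S + 1/S)/2 * x))"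
    using lo by (simp add: t_def y_def)
  show "alphaT S m + betaT S m * cos (real (2*m) * arccos ((S + 1/S)/2 * x)) \<le> alphaT S m + betaT S m"
    using hi by (simp add: t_def y_def)
qed

theorem lemma3p1:
  fixes m :: nat and S :: real
  assumes "m \<ge> 1" and "S > 1"
  shows
    "(\<forall>z::complex. (\<forall>j\<in>{1..2*m}. z \<noteq> zT S m j) \<longrightarrow>
        rT S m z = 1 / (of_real (alphaT S m) + of_real (betaT S m) * chebT (2*m) (of_real ((S + 1/S)/2) * z))
      \<and> rT S m z = 1 / (of_real (alphaT S m - betaT S m)
                          + 2 * of_real (betaT S m) * (chebT m (of_real ((S + 1/S)/2) * z))\<^sup>2))
   \<and> (\<exists>q :: complex poly. degree q = 2*m
        \<and> (\<forall>z. poly q z = 0 \<longleftrightarrow> (\<exists>j\<in>{1..2*m}. z = zT S m j))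
        \<and> (\<forall>z. poly q z \<noteq> 0 \<longrightarrow> rT S m z = 1 / poly q z))
   \<and> (\<forall>x\<in>{-2/(S + 1/S)..2/(S + 1/S)}.
        rT S m (of_real x) \<in> \<real>
        \<and> 1 / (alphaT S m + betaT S m) \<le> Re (rT S m (of_real x))
        \<and> Re (rT S m (of_real x)) \<le> 1 / (alphaT S m - betaT S m))
   \<and> (\<exists>xs :: nat \<Rightarrow> real.
        (\<forall>k<2*m. xs k < xs (Suc k))
        \<and> (\<forall>k\<le>2*m. xs k \<in> {-2/(S + 1/S)..2/(S + 1/S)})
        \<and> ((\<forall>k\<le>2*m. rT S m (of_real (xs k)) =
               of_real (if even k then 1 / (alphaT S m + betaT S m) else 1 / (alphaT S m - betaT S m)))
         \<or> (\<forall>k\<le>2*m. rT S m (of_real (xs k)) =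
               of_real (if even k then 1 / (alphaT S m - betaT S m) else 1 / (alphaT S m + betaT S m)))))"
proof -
  define c where "c = (S + 1/S)/2"
  have c_pos: "c > 0" using assms(2) by (simp add: c_def add_pos_pos)
  have m: "m \<ge> 1" and S: "S > 1" using assms by auto
  have c2: "2/(S + 1/S) = 1/c" by (simp add: c_def)
  have P1: "\<forall>z::complex. (\<forall>j\<in>{1..2*m}. z \<noteq> zT S m j) \<longrightarrow>
        rT S m z = 1 / (of_real (alphaT S m) + of_real (betaT S m) * chebT (2*m) (of_real ((S + 1/S)/2) * z))
      \<and> rT S m z = 1 / (of_real (alphaT S m - betaT S m)
                          + 2 * of_real (betaT S m) * (chebT m (of_real ((S + 1/S)/2) * z))\<^sup>2)"
  proof (intro allI impI)
    fix z :: complex assume nn: "\<forall>j\<in>{1..2*m}. z \<noteq> zT S m j"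
    have r: "rT S m z = 1 / (of_real (alphaT S m) + of_real (betaT S m) * chebT (2*m) (of_real ((S + 1/S)/2) * z))"
      using master_nonnode[OF m S nn] by blast
    have e: "of_real (alphaT S m) + of_real (betaT S m) * chebT (2*m) (of_real ((S + 1/S)/2) * z)
        = of_real (alphaT S m - betaT S m) + 2 * of_real (betaT S m) * (chebT m (of_real ((S + 1/S)/2) * z))\<^sup>2"
      unfolding cheb_double by (simp add: algebra_simps)
    show "rT S m z = 1 / (of_real (alphaT S m) + of_real (betaT S m) * chebT (2*m) (of_real ((S + 1/S)/2) * z))
      \<and> rT S m z = 1 / (of_real (alphaT S m - betaT S m)
                          + 2 * of_real (betaT S m) * (chebT m (of_real ((S + 1/S)/2) * z))\<^sup>2)"
      using r e by simp
  qed
  define q where "q = [:complex_of_real (alphaT S m):] + smult (of_real (betaT S m)) (pcompose (cheb (2*m)) [:0, complex_of_real c:])"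
  have pq: "poly q z = of_real (alphaT S m) + of_real (betaT S m) * chebT (2*m) (of_real ((S + 1/S)/2) * z)" for z
    by (simp add: q_def poly_pcompose chebT_eq c_def mult.commute)
  have bp: "betaT S m > 0" using ab_pos[OF m S] by auto
  have P2: "\<exists>q :: complex poly. degree q = 2*m
        \<and> (\<forall>z. poly q z = 0 \<longleftrightarrow> (\<exists>j\<in>{1..2*m}. z = zT S m j))
        \<and> (\<forall>z. poly q z \<noteq> 0 \<longrightarrow> rT S m z = 1 / poly q z)"
  proof (intro exI conjI allI impI)
    have d1: "degree [:0, complex_of_real c:] = 1" using c_pos by simp
    have d2: "degree (smult (complex_of_real (betaT S m)) (pcompose (cheb (2*m)) [:0, complex_of_real c:])) = 2*m"
      using bp c_pos by (simp add: degree_pcompose d1 cheb_degree)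
    show "degree q = 2*m" unfolding q_def
      by (subst degree_add_eq_right) (use d2 m in auto)
    fix z
    show "poly q z = 0 \<longleftrightarrow> (\<exists>j\<in>{1..2*m}. z = zT S m j)"
    proof
      assume "poly q z = 0"
      then show "\<exists>j\<in>{1..2*m}. z = zT S m j" using master_nonnode[OF m S, of z] pq by auto
    next
      assume "\<exists>j\<in>{1..2*m}. z = zT S m j"
      then obtain j where "j \<in> {1..2*m}" "z = zT S m j" by blast
      then show "poly q z = 0" using master_node[OF m S] pq by simp
    qed
  next
    fix z assume "poly q z \<noteq> 0"
    then have "\<forall>j\<in>{1..2*m}. z \<noteq> zT S m j" using master_node[OF m S] pq by auto
    then show "rT S m z = 1 / poly q z" using master_nonnode[OF m S] pq by auto
  qed
  have cx: "\<bar>(S + 1/S)/2 * x\<bar> \<le> 1" if "\<bar>x\<bar> \<le> 1/c" for x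
  proof -
    have "\<bar>c * x\<bar> = c * \<bar>x\<bar>" using c_pos by (simp add: abs_mult)
    also have "\<dots> \<le> c * (1/c)" using that c_pos by (intro mult_left_mono) auto
    also have "\<dots> = 1" using c_pos by simp
    finally show ?thesis by (simp add: c_def)
  qed
  have abp: "alphaT S m - betaT S m > 0" using ab_pos[OF m S] by auto
  have P3: "\<forall>x\<in>{-2/(S + 1/S)..2/(S + 1/S)}.
        rT S m (of_real x) \<in> \<real>
        \<and> 1 / (alphaT S m + betaT S m) \<le> Re (rT S m (of_real x))
        \<and> Re (rT S m (of_real x)) \<le> 1 / (alphaT S m - betaT S m)"
  proof
    fix x assume "x \<in> {-2/(S + 1/S)..2/(S + 1/S)}"
    then have "\<bar>x\<bar> \<le> 1/c" by (auto simp: c2)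
    note cx' = cx[OF this]
    define v where "v = alphaT S m + betaT S m * cos (real (2*m) * arccos ((S + 1/S)/2 * x))"
    have r: "rT S m (of_real x) = of_real (1/v)" using real_val(1)[OF m S cx'] by (simp add: v_def)
    have lo: "alphaT S m - betaT S m \<le> v" using real_val(2)[OF m S cx'] by (simp add: v_def)
    have hi: "v \<le> alphaT S m + betaT S m" using real_val(3)[OF m S cx'] by (simp add: v_def)
    have vp: "v > 0" using lo abp by linarith
    have "1 / (alphaT S m + betaT S m) \<le> 1 / v"
      by (rule divide_left_mono[OF hi]) (use vp hi in auto)
    moreover have "1 / v \<le> 1 / (alphaT S m - betaT S m)"
      by (rule divide_left_mono[OF lo]) (use vp abp in auto)
    ultimately show "rT S m (of_real x) \<in> \<real>
        \<and> 1 / (alphaT S m + betaT S m) \<le> Re (rT S m (of_real x))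
        \<and> Re (rT S m (of_real x)) \<le> 1 / (alphaT S m - betaT S m)"
      unfolding r by simp
  qed
  define xs where "xs k = - cos (real k * pi / real (2*m)) / c" for k
  have P4: "(\<forall>k<2*m. xs k < xs (Suc k))
        \<and> (\<forall>k\<le>2*m. xs k \<in> {-2/(S + 1/S)..2/(S + 1/S)})
        \<and> (\<forall>k\<le>2*m. rT S m (of_real (xs k)) =
               of_real (if even k then 1 / (alphaT S m + betaT S m) else 1 / (alphaT S m - betaT S m)))"
  proof (intro conjI allI impI)
    fix k assume k: "k < 2*m"
    have "cos (real (Suc k) * pi / real (2*m)) < cos (real k * pi / real (2*m))"
    proof (rule cos_monotone_0_pi)
      show "0 \<le> real k * pi / real (2*m)" by simp
      show "real k * pi / real (2*m) < real (Suc k) * pi / real (2*m)"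
        using m by (simp add: divide_strict_right_mono)
      have "real (Suc k) \<le> real (2*m)" using k by linarith
      then have "real (Suc k) * pi \<le> real (2*m) * pi" by (simp add: mult_right_mono)
      then show "real (Suc k) * pi / real (2*m) \<le> pi" using m by (simp add: divide_le_eq)
    qed
    then show "xs k < xs (Suc k)" unfolding xs_def using c_pos by (simp add: divide_strict_right_mono)
  next
    fix k assume k: "k \<le> 2*m"
    have "\<bar>xs k\<bar> \<le> 1/c" unfolding xs_def using c_pos by (simp add: divide_right_mono abs_divide)
    then show "xs k \<in> {-2/(S + 1/S)..2/(S + 1/S)}" by (auto simp: c2)
  next
    fix k assume k: "k \<le> 2*m"
    define u where "u = real k * pi / real (2*m)"
    have u0: "0 \<le> u" and upi: "u \<le> pi"
    proof -
      show "0 \<le> u" by (simp add: u_def)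
      have "real k \<le> real (2*m)" using k by linarith
      then have "real k * pi \<le> real (2*m) * pi" by (simp add: mult_right_mono)
      then show "u \<le> pi" using m by (simp add: u_def divide_le_eq)
    qed
    have cxk: "(S + 1/S)/2 * xs k = - cos u" unfolding xs_def u_def c_def[symmetric] using c_pos by simp
    have "\<bar>xs k\<bar> \<le> 1/c" unfolding xs_def using c_pos by (simp add: divide_right_mono abs_divide)
    note cx' = cx[OF this]
    have ac: "arccos (- cos u) = pi - u" using u0 upi by (simp add: arccos_minus arccos_cos)
    have "real (2*m) * (pi - u) = real (2*m - k) * pi" using m k by (simp add: u_def field_simps of_nat_diff)
    then have cv: "cos (real (2*m) * arccos ((S + 1/S)/2 * xs k)) = (-1) ^ (2*m - k)"
      unfolding cxk ac by simp
    have ev: "even (2*m - k) = even k"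
    proof -
      have "2*m - k + k = 2*m" using k by simp
      then have "even (2*m - k + k)" by simp
      then show ?thesis by auto
    qed
    have pw: "(-1::real) ^ (2*m - k) = (if even k then 1 else -1)"
      by (simp only: minus_one_power_iff ev)
    note r = real_val(1)[OF m S cx', unfolded cv pw]
    show "rT S m (of_real (xs k)) =
               of_real (if even k then 1 / (alphaT S m + betaT S m) else 1 / (alphaT S m - betaT S m))"
    proof (cases "even k")
      case True
      then show ?thesis by (simp only: r True if_True mult_1_right)
    next
      case False
      then show ?thesis by (simp only: r False if_False mult_minus1_right add_uminus_conv_diff)
    qed
  qed
  show ?thesis
    apply (intro conjI)
       apply (rule P1)
      apply (rule P2)
     apply (rule P3)
    apply (rule exI[of _ xs])
    using P4 by blast
qed

end
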